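(* Let $G$ be a group, $N$ a normal subgroup of $G$, $\phi:G\to G/N$ the canonical projection, and $L,R$ nonempty subsets of $G$. Then $2\mathrm{S}(G;L,R)$ is weakly connected if and only if $2\mathrm{S}(G/N;\phi(L),\phi(R))$ is weakly connected and any two elements of $N$ are weakly connected to each other in $2\mathrm{S}(G;L,R)$.
   Context: For nonempty subsets $L,R$ of a group $G$, the two-sided group digraph $2\mathrm{S}(G;L,R)$ has vertex set $G$ and a directed arc $(g,h)$ if and only if $h=l^{-1}gr$ for some $l\in L$, $r\in R$. Vertex $g$ is weakly connected to $h$ if there is a sequence $g=g_0,\dots,g_n=h$ with, for each $i$, $(g_{i-1},g_i)$ or $(g_i,g_{i-1})$ an arc (intermediate vertices arbitrary in $G$); a digraph is weakly connected if every pair of vertices is weakly connected. *)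

theory Defs
  imports "HOL-Algebra.Algebra"
begin

definition two_sided_arc :: "('a, 'b) monoid_scheme \<Rightarrow> 'a set \<Rightarrow> 'a set \<Rightarrow> 'a \<Rightarrow> 'a \<Rightarrow> bool" where
  "two_sided_arc G L R g h \<longleftrightarrow> g \<in> carrier G \<and> h \<in> carrier G \<and>
     (\<exists>l\<in>L. \<exists>r\<in>R. h = inv\<^bsub>G\<^esub> l \<otimes>\<^bsub>G\<^esub> g \<otimes>\<^bsub>G\<^esub> r)"

definition weakly_connected_to :: "('a, 'b) monoid_scheme \<Rightarrow> 'a set \<Rightarrow> 'a set \<Rightarrow> 'a \<Rightarrow> 'a \<Rightarrow> bool" where
  "weakly_connected_to G L R g h \<longleftrightarrow>
     (\<lambda>x y. two_sided_arc G L R x y \<or> two_sided_arc G L R y x)\<^sup>*\<^sup>* g h"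

definition weakly_connected_2S :: "('a, 'b) monoid_scheme \<Rightarrow> 'a set \<Rightarrow> 'a set \<Rightarrow> bool" where
  "weakly_connected_2S G L R \<longleftrightarrow>
     (\<forall>g\<in>carrier G. \<forall>h\<in>carrier G. weakly_connected_to G L R g h)"

end

theory Submission
  imports Defs
begin

lemma (in group) inv_cancel_left1: "x \<in> carrier G \<Longrightarrow> y \<in> carrier G \<Longrightarrow> inv x \<otimes> (x \<otimes> y) = y"
  by (simp add: m_assoc[symmetric])

lemma (in group) inv_cancel_left2: "x \<in> carrier G \<Longrightarrow> y \<in> carrier G \<Longrightarrow> x \<otimes> (inv x \<otimes> y) = y"
  by (simp add: m_assoc[symmetric])

lemma arc_proj:
  assumes gh: "group_hom G Q f" and L: "L \<subseteq> carrier G" and R: "R \<subseteq> carrier G"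
    and a: "two_sided_arc G L R x y"
  shows "two_sided_arc Q (f ` L) (f ` R) (f x) (f y)"
proof -
  interpret group_hom G Q f by (rule gh)
  from a obtain l r where l: "l \<in> L" and r: "r \<in> R" and x: "x \<in> carrier G" and y: "y \<in> carrier G"
    and e: "y = inv\<^bsub>G\<^esub> l \<otimes>\<^bsub>G\<^esub> x \<otimes>\<^bsub>G\<^esub> r"
    unfolding two_sided_arc_def by blast
  have lc: "l \<in> carrier G" "r \<in> carrier G" using l r L R by auto
  have "f y = inv\<^bsub>Q\<^esub> (f l) \<otimes>\<^bsub>Q\<^esub> f x \<otimes>\<^bsub>Q\<^esub> f r"
    using e lc x by (simp add: hom_mult hom_inv)
  moreover have "f y \<in> carrier Q" "f x \<in> carrier Q" using x y by auto
  ultimately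
  show ?thesis unfolding two_sided_arc_def using l r x y by auto
qed

lemma wc_proj:
  assumes gh: "group_hom G Q f" and L: "L \<subseteq> carrier G" and R: "R \<subseteq> carrier G"
    and a: "weakly_connected_to G L R x y"
  shows "weakly_connected_to Q (f ` L) (f ` R) (f x) (f y)"
  using a unfolding weakly_connected_to_def
proof (induction rule: rtranclp_induct)
  case base then show ?case by simp
next
  case (step y z)
  from step.hyps(2) have "two_sided_arc Q (f ` L) (f ` R) (f y) (f z) \<or> two_sided_arc Q (f ` L) (f ` R) (f z) (f y)"
    using arc_proj[OF gh L R] by blast
  with step.IH show ?case by (simp add: rtranclp.rtrancl_into_rtrancl)
qed

lemma wc_sym:
  "weakly_connected_to G L R x y \<Longrightarrow> weakly_connected_to G L R y x"
  unfolding weakly_connected_to_def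
  by (induction rule: rtranclp_induct) (auto intro: converse_rtranclp_into_rtranclp)

lemma wc_trans:
  "weakly_connected_to G L R x y \<Longrightarrow> weakly_connected_to G L R y z \<Longrightarrow> weakly_connected_to G L R x z"
  unfolding weakly_connected_to_def by auto

lemma lift:
  assumes gh: "group_hom G Q f" and surj: "carrier Q = f ` carrier G"
    and L: "L \<subseteq> carrier G" and R: "R \<subseteq> carrier G"
    and a: "weakly_connected_to Q (f ` L) (f ` R) A0 B0"
  shows "\<forall>g\<in>carrier G. f g = A0 \<longrightarrow> (\<exists>h\<in>carrier G. f h = B0 \<and> weakly_connected_to G L R g h)"
  using a[unfolded weakly_connected_to_def]
proof (induction rule: rtranclp_induct)
  case base then show ?case by (auto simp: weakly_connected_to_def)
next
  case (step B0 Z)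
  interpret group_hom G Q f by (rule gh)
  show ?case
  proof (intro ballI impI)
  fix g assume gprems: "g \<in> carrier G" "f g = A0"
  from step.IH gprems obtain h where h: "h \<in> carrier G" "f h = B0" "weakly_connected_to G L R g h"
    by blast
  from step.hyps(2) show "\<exists>h\<in>carrier G. f h = Z \<and> weakly_connected_to G L R g h"
  proof
    assume "two_sided_arc Q (f ` L) (f ` R) B0 Z"
    then obtain l r where l: "l \<in> L" and r: "r \<in> R" and e: "Z = inv\<^bsub>Q\<^esub> f l \<otimes>\<^bsub>Q\<^esub> B0 \<otimes>\<^bsub>Q\<^esub> f r"
      unfolding two_sided_arc_def by blast
    have lc: "l \<in> carrier G" "r \<in> carrier G" using l r L R by auto
    define h' where "h' = inv\<^bsub>G\<^esub> l \<otimes>\<^bsub>G\<^esub> h \<otimes>\<^bsub>G\<^esub> r"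
    have h'c: "h' \<in> carrier G" using lc h by (simp add: h'_def)
    have "two_sided_arc G L R h h'" unfolding two_sided_arc_def h'_def using l r lc h by auto
    then have "weakly_connected_to G L R h h'" unfolding weakly_connected_to_def by auto
    then have w: "weakly_connected_to G L R g h'" using wc_trans[OF h(3)] by blast
    have "f h' = Z" using e lc h by (simp add: h'_def hom_mult hom_inv)
    then show ?thesis using w h'c by blast
  next
    assume "two_sided_arc Q (f ` L) (f ` R) Z B0"
    then obtain l r where l: "l \<in> L" and r: "r \<in> R" and e: "B0 = inv\<^bsub>Q\<^esub> f l \<otimes>\<^bsub>Q\<^esub> Z \<otimes>\<^bsub>Q\<^esub> f r"
      and Zc: "Z \<in> carrier Q"
      unfolding two_sided_arc_def by blast
    have lc: "l \<in> carrier G" "r \<in> carrier G" using l r L R by auto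
    define h' where "h' = l \<otimes>\<^bsub>G\<^esub> h \<otimes>\<^bsub>G\<^esub> inv\<^bsub>G\<^esub> r"
    have h'c: "h' \<in> carrier G" using lc h by (simp add: h'_def)
    have "h = inv\<^bsub>G\<^esub> l \<otimes>\<^bsub>G\<^esub> h' \<otimes>\<^bsub>G\<^esub> r" using lc h
      by (simp add: h'_def G.m_assoc G.inv_cancel_left1)
    then have "two_sided_arc G L R h' h" unfolding two_sided_arc_def using l r lc h h'c by auto
    then have "weakly_connected_to G L R h h'" unfolding weakly_connected_to_def by auto
    moreover have "f h' = Z"
    proof -
      have fl: "f l \<in> carrier Q" "f r \<in> carrier Q" using lc by auto
      have "f h' = f l \<otimes>\<^bsub>Q\<^esub> B0 \<otimes>\<^bsub>Q\<^esub> inv\<^bsub>Q\<^esub> f r" using lc h by (simp add: h'_def hom_mult hom_inv)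
      also have "\<dots> = Z" using e fl Zc by (simp add: H.m_assoc H.inv_cancel_left2)
      finally show ?thesis .
    qed
    moreover have "weakly_connected_to G L R g h'" using wc_trans[OF h(3) \<open>weakly_connected_to G L R h h'\<close>] .
    ultimately show ?thesis using h'c by blast
  qed
  qed
qed

theorem mainTheorem19:
  fixes G :: "('a, 'b) monoid_scheme" and N L R :: "'a set"
  assumes "group G" and "N \<lhd> G"
    and "L \<subseteq> carrier G" and "L \<noteq> {}"
    and "R \<subseteq> carrier G" and "R \<noteq> {}"
  shows "weakly_connected_2S G L R \<longleftrightarrow>
           (weakly_connected_2S (G Mod N) ((\<lambda>g. N #>\<^bsub>G\<^esub> g) ` L) ((\<lambda>g. N #>\<^bsub>G\<^esub> g) ` R)
            \<and> (\<forall>x\<in>N. \<forall>y\<in>N. weakly_connected_to G L R x y))"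
proof -
  interpret normal N G by (rule assms(2))
  let ?f = "\<lambda>g. N #>\<^bsub>G\<^esub> g"
  have gh: "group_hom G (G Mod N) ?f"
    unfolding group_hom_def group_hom_axioms_def
    using factorgroup_is_group r_coset_hom_Mod is_group by blast
  have surj: "carrier (G Mod N) = ?f ` carrier G" by (rule carrier_FactGroup)
  have Nsub: "N \<subseteq> carrier G" by (rule subset)
  show ?thesis
  proof
    assume w: "weakly_connected_2S G L R"
    show "weakly_connected_2S (G Mod N) (?f ` L) (?f ` R) \<and> (\<forall>x\<in>N. \<forall>y\<in>N. weakly_connected_to G L R x y)"
    proof
      show "weakly_connected_2S (G Mod N) (?f ` L) (?f ` R)"
        unfolding weakly_connected_2S_def
      proof (intro ballI)
        fix A1 B1 assume "A1 \<in> carrier (G Mod N)" "B1 \<in> carrier (G Mod N)"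
        then obtain x y where xy: "x \<in> carrier G" "y \<in> carrier G" "A1 = ?f x" "B1 = ?f y"
          unfolding surj by blast
        have "weakly_connected_to G L R x y" using w xy unfolding weakly_connected_2S_def by blast
        from wc_proj[OF gh assms(3) assms(5) this] show "weakly_connected_to (G Mod N) (?f ` L) (?f ` R) A1 B1"
          using xy by simp
      qed
      show "\<forall>x\<in>N. \<forall>y\<in>N. weakly_connected_to G L R x y"
        using w Nsub unfolding weakly_connected_2S_def by blast
    qed
  next
    assume "weakly_connected_2S (G Mod N) (?f ` L) (?f ` R) \<and> (\<forall>x\<in>N. \<forall>y\<in>N. weakly_connected_to G L R x y)"
    then have q: "weakly_connected_2S (G Mod N) (?f ` L) (?f ` R)"
      and n: "\<forall>x\<in>N. \<forall>y\<in>N. weakly_connected_to G L R x y" by auto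
    have key: "\<exists>m\<in>N. weakly_connected_to G L R g m" if g: "g \<in> carrier G" for g
    proof -
      have "?f g \<in> carrier (G Mod N)" "N \<in> carrier (G Mod N)" using g surj by auto
        (metis one_FactGroup factorgroup_is_group monoid.one_closed group.is_monoid)
      then have "weakly_connected_to (G Mod N) (?f ` L) (?f ` R) (?f g) N"
        using q unfolding weakly_connected_2S_def by blast
      from lift[OF gh surj assms(3) assms(5) this] g obtain h where
        "h \<in> carrier G" "N #>\<^bsub>G\<^esub> h = N" "weakly_connected_to G L R g h" by blast
      moreover have "h \<in> N" using \<open>h \<in> carrier G\<close> \<open>N #>\<^bsub>G\<^esub> h = N\<close> rcos_self[OF \<open>h \<in> carrier G\<close> subgroup_axioms]
        by simp
      ultimately show ?thesis by blast
    qed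
    show "weakly_connected_2S G L R"
      unfolding weakly_connected_2S_def
    proof (intro ballI)
      fix g h assume "g \<in> carrier G" "h \<in> carrier G"
      from key[OF this(1)] key[OF this(2)] obtain m1 m2 where
        "m1 \<in> N" "m2 \<in> N" "weakly_connected_to G L R g m1" "weakly_connected_to G L R h m2" by blast
      then have "weakly_connected_to G L R m1 m2" using n by blast
      then have "weakly_connected_to G L R g m2" using wc_trans[OF \<open>weakly_connected_to G L R g m1\<close>] by blast
      then show "weakly_connected_to G L R g h" by (rule wc_trans) (rule wc_sym[OF \<open>weakly_connected_to G L R h m2\<close>])
    qed
  qed
qed

end
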